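(* Let $(E,\mathcal A,\mu)$ be a finite measure space and let $B=(B_x)_{x\in E}$ be a centered, jointly measurable Gaussian field with $B_x\sim N(0,1)$ for every $x\in E$ and covariance kernel $K(x,y)=\mathbb E[B_xB_y]$. Suppose that there exists $\beta>0$ such that $$\int_{E^2}K(x,y)^q\,\mu(dx)\,\mu(dy)\asymp q^{-\beta}\qquad (q\to\infty).$$ Then for every $u\in\mathbb R$ and every $p\in\mathbb N$: $V(u)\in\mathbb D^{p,2}$ if and only if $p<\beta+\tfrac12$.
   Context: Hermite polynomials: $H_0(x)=1$, $H_1(x)=x$, $H_{q+1}(x)=xH_q(x)-qH_{q-1}(x)$. Let $\phi(x)=e^{-x^2/2}/\sqrt{2\pi}$. For $\varphi\in L^2(\mathbb R,\phi(x)dx)$ set $a_q(\varphi)=\frac1{q!}\int_{\mathbb R}H_q(x)\varphi(x)\phi(x)\,dx$, and define the functional $Y(\varphi)=\int_E\varphi(B_x)\,\mu(dx)$, whose $q$-th chaotic component is $Y(\varphi)[q]=a_q(\varphi)\int_E H_q(B_x)\,\mu(dx)$, with $\mathrm{Var}(Y(\varphi)[q])=q!\,a_q(\varphi)^2\int_{E^2}K(x,y)^q\mu(dx)\mu(dy)$. For $p\in\mathbb N$, we say $Y(\varphi)\in\mathbb D^{p,2}$ (has $p$-th square integrable Malliavin derivative) iff $\sum_{q\ge0}q^p\,q!\,a_q(\varphi)^2\int_{E^2}K(x,y)^q\,\mu(dx)\mu(dy)<\infty$. The excursion measure at level $u$ is $V(u)=\int_E\mathbf 1_{\{B_x\ge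 u\}}\mu(dx)=Y(\mathbf 1_{[u,\infty)})$. Notation: for positive functions, $f(q)\asymp g(q)$ means $\limsup_{q\to\infty} f(q)/g(q)<\infty$ and $\limsup_{q\to\infty} g(q)/f(q)<\infty$ (both ratios eventually bounded). *)

theory Defs
  imports "HOL-Probability.Probability"
begin

fun hermite :: "nat \<Rightarrow> real \<Rightarrow> real" where
  "hermite 0 x = 1"
| "hermite (Suc 0) x = x"
| "hermite (Suc (Suc q)) x = x * hermite (Suc q) x - real (Suc q) * hermite q x"

definition hermite_coeff :: "(real \<Rightarrow> real) \<Rightarrow> nat \<Rightarrow> real" where
  "hermite_coeff f q =
     (1 / fact q) * integral\<^sup>L lborel (\<lambda>x. hermite q x * f x * std_normal_density x)"

definition centered_gaussian_rv :: "'w measure \<Rightarrow> ('w \<Rightarrow> real) \<Rightarrow> bool" where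
  "centered_gaussian_rv P X \<longleftrightarrow>
     (AE w in P. X w = 0) \<or>
     (\<exists>\<sigma>>0. distributed P lborel X (\<lambda>x. ennreal (normal_density 0 \<sigma> x)))"

definition std_gaussian_field :: "'a measure \<Rightarrow> 'w measure \<Rightarrow> ('a \<Rightarrow> 'w \<Rightarrow> real) \<Rightarrow> bool" where
  "std_gaussian_field M P B \<longleftrightarrow>
     prob_space P \<and>
     (\<lambda>(x, w). B x w) \<in> borel_measurable (M \<Otimes>\<^sub>M P) \<and>
     (\<forall>x\<in>space M. distributed P lborel (B x) (\<lambda>t. ennreal (normal_density 0 1 t))) \<and>
     (\<forall>S c. finite S \<longrightarrow> S \<subseteq> space M \<longrightarrow>
        centered_gaussian_rv P (\<lambda>w. \<Sum>x\<in>S. c x * B x w))"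

definition cov_kernel :: "'w measure \<Rightarrow> ('a \<Rightarrow> 'w \<Rightarrow> real) \<Rightarrow> 'a \<Rightarrow> 'a \<Rightarrow> real" where
  "cov_kernel P B x y = integral\<^sup>L P (\<lambda>w. B x w * B y w)"

definition kernel_moment :: "'a measure \<Rightarrow> ('a \<Rightarrow> 'a \<Rightarrow> real) \<Rightarrow> nat \<Rightarrow> real" where
  "kernel_moment M K q = integral\<^sup>L (M \<Otimes>\<^sub>M M) (\<lambda>(x, y). K x y ^ q)"

text \<open>Y(phi) has a p-th square integrable Malliavin derivative (series criterion).\<close>
definition in_D_p2 :: "'a measure \<Rightarrow> ('a \<Rightarrow> 'a \<Rightarrow> real) \<Rightarrow> (real \<Rightarrow> real) \<Rightarrow> nat \<Rightarrow> bool" where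
  "in_D_p2 M K f p \<longleftrightarrow>
     summable (\<lambda>q. real q ^ p * fact q * (hermite_coeff f q)\<^sup>2 * kernel_moment M K q)"

definition asymp_comparable :: "(nat \<Rightarrow> real) \<Rightarrow> (nat \<Rightarrow> real) \<Rightarrow> bool" where
  "asymp_comparable f g \<longleftrightarrow>
     (\<forall>\<^sub>F q in sequentially. f q > 0 \<and> g q > 0) \<and>
     (\<exists>C. \<forall>\<^sub>F q in sequentially. f q / g q \<le> C) \<and>
     (\<exists>C. \<forall>\<^sub>F q in sequentially. g q / f q \<le> C)"

end

theory Submission
  imports Defs "HOL-Real_Asymp.Real_Asymp" "HOL-Analysis.Summation_Tests"
begin



lemma hermite_rec: "hermite (Suc n) x = x * hermite n x - real n * hermite (n - 1) x"
  by (cases n) auto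

lemma hermite_deriv_Suc:
  "(hermite (Suc n) has_real_derivative (real (Suc n) * hermite n x)) (at x)"
proof -
  have "\<forall>x. (hermite (Suc n) has_real_derivative (real (Suc n) * hermite n x)) (at x) \<and>
            (hermite (Suc (Suc n)) has_real_derivative (real (Suc (Suc n)) * hermite (Suc n) x)) (at x)"
  proof (induction n)
    case 0
    show ?case
    proof
      fix x :: real
      have e1: "hermite (Suc 0) = (\<lambda>x. x)" by (rule ext) simp
      have e2: "hermite (Suc (Suc 0)) = (\<lambda>x. x * x - 1)" by (rule ext) simp
      show "(hermite (Suc 0) has_real_derivative (real (Suc 0) * hermite 0 x)) (at x) \<and>
            (hermite (Suc (Suc 0)) has_real_derivative (real (Suc (Suc 0)) * hermite (Suc 0) x)) (at x)"
        unfolding e1 e2 by (auto intro!: derivative_eq_intros)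
    qed
  next
    case (Suc n)
    show ?case
    proof
      fix x :: real
      have A: "(hermite (Suc n) has_real_derivative (real (Suc n) * hermite n x)) (at x)"
       and B: "(hermite (Suc (Suc n)) has_real_derivative (real (Suc (Suc n)) * hermite (Suc n) x)) (at x)"
        using Suc.IH by blast+
      have e: "hermite (Suc (Suc (Suc n))) = (\<lambda>x. x * hermite (Suc (Suc n)) x - real (Suc (Suc n)) * hermite (Suc n) x)"
        by (rule ext) simp
      have "((\<lambda>x. x * hermite (Suc (Suc n)) x - real (Suc (Suc n)) * hermite (Suc n) x) has_real_derivative
             (x * (real (Suc (Suc n)) * hermite (Suc n) x) + 1 * hermite (Suc (Suc n)) x
               - real (Suc (Suc n)) * (real (Suc n) * hermite n x))) (at x)"
        by (rule DERIV_diff[OF DERIV_mult'[OF DERIV_ident B] DERIV_cmult[OF A]])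
      moreover have "x * (real (Suc (Suc n)) * hermite (Suc n) x) + 1 * hermite (Suc (Suc n)) x
               - real (Suc (Suc n)) * (real (Suc n) * hermite n x) = real (Suc (Suc (Suc n))) * hermite (Suc (Suc n)) x"
        by (simp add: algebra_simps)
      ultimately have C: "(hermite (Suc (Suc (Suc n))) has_real_derivative (real (Suc (Suc (Suc n))) * hermite (Suc (Suc n)) x)) (at x)"
        unfolding e by (rule DERIV_cong)
      show "(hermite (Suc (Suc n)) has_real_derivative (real (Suc (Suc n)) * hermite (Suc n) x)) (at x) \<and>
            (hermite (Suc (Suc (Suc n))) has_real_derivative (real (Suc (Suc (Suc n))) * hermite (Suc (Suc n)) x)) (at x)"
        using B C by blast
    qed
  qed
  then show ?thesis by blast
qed

lemma hermite_deriv: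
  "(hermite n has_real_derivative (real n * hermite (n - 1) x)) (at x)"
proof (cases n)
  case 0
  have e: "hermite 0 = (\<lambda>x. 1)" by (rule ext) simp
  show ?thesis using 0 by (simp add: e)
next
  case (Suc m) then show ?thesis using hermite_deriv_Suc[of m x] by simp
qed

lemma isCont_hermite: "isCont (hermite n) x"
  using hermite_deriv by (rule DERIV_isCont)

lemma continuous_on_hermite: "continuous_on A (hermite n)"
  by (simp add: continuous_at_imp_continuous_on isCont_hermite)

lemma hermite_measurable[measurable]: "hermite n \<in> borel_measurable borel"
  by (intro borel_measurable_continuous_onI continuous_on_hermite)

lemma abs_le_1_sq: "\<bar>x::real\<bar> \<le> 1 + x^2"
proof (cases "\<bar>x\<bar> \<le> 1")
  case True then show ?thesis using zero_le_power2[of x] by linarith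
next
  case False
  then have "\<bar>x\<bar> * 1 \<le> \<bar>x\<bar> * \<bar>x\<bar>" by (intro mult_left_mono) auto
  then show ?thesis using abs_mult_self_eq[of x] by (simp add: power2_eq_square)
qed

lemma hermite_bound: "\<bar>hermite n x\<bar> \<le> fact n * (1 + x^2) ^ n"
proof -
  have "\<bar>hermite n x\<bar> \<le> fact n * (1 + x^2) ^ n \<and> \<bar>hermite (Suc n) x\<bar> \<le> fact (Suc n) * (1 + x^2) ^ (Suc n)"
  proof (induction n)
    case 0
    have "\<bar>x\<bar> \<le> 1 + x^2" by (rule abs_le_1_sq)
    then show ?case by simp
  next
    case (Suc n)
    have h0: "\<bar>hermite n x\<bar> \<le> fact n * (1 + x^2) ^ n" and h1: "\<bar>hermite (Suc n) x\<bar> \<le> fact (Suc n) * (1 + x^2) ^ (Suc n)"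
      using Suc by auto
    have ax: "\<bar>x\<bar> \<le> 1 + x^2" by (rule abs_le_1_sq)
    have p1: "1 \<le> 1 + x^2" by simp
    have "\<bar>hermite (Suc (Suc n)) x\<bar> = \<bar>x * hermite (Suc n) x - real (Suc n) * hermite n x\<bar>"
      by (simp only: hermite.simps)
    also have "\<dots> \<le> \<bar>x * hermite (Suc n) x\<bar> + \<bar>real (Suc n) * hermite n x\<bar>"
      by (rule abs_triangle_ineq4)
    also have "\<dots> = \<bar>x\<bar> * \<bar>hermite (Suc n) x\<bar> + real (Suc n) * \<bar>hermite n x\<bar>"
      by (simp only: abs_mult abs_of_nat)
    also have "\<dots> \<le> (1 + x^2) * (fact (Suc n) * (1 + x^2) ^ (Suc n)) + real (Suc n) * (fact n * (1 + x^2) ^ n)"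
      by (intro add_mono mult_mono h0 h1 ax) auto
    also have "\<dots> \<le> (1 + x^2) * (fact (Suc n) * (1 + x^2) ^ (Suc n)) + fact (Suc n) * (1 + x^2) ^ (Suc (Suc n))"
    proof -
      have "(1 + x^2) ^ n \<le> (1 + x^2) ^ (Suc (Suc n))" by (rule power_increasing) auto
      then have "real (Suc n) * fact n * (1 + x^2) ^ n \<le> real (Suc n) * fact n * (1 + x^2) ^ (Suc (Suc n))"
        by (intro mult_left_mono) auto
      then show ?thesis by (simp add: algebra_simps)
    qed
    also have "\<dots> = 2 * fact (Suc n) * (1 + x^2) ^ (Suc (Suc n))" by (simp add: algebra_simps)
    also have "\<dots> \<le> fact (Suc (Suc n)) * (1 + x^2) ^ (Suc (Suc n))"
    proof -
      have "2 * fact (Suc n) \<le> (fact (Suc (Suc n)) :: real)" by simp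
      then show ?thesis by (intro mult_right_mono) auto
    qed
    finally show ?case using h1 by simp
  qed
  then show ?thesis by blast
qed

lemma pw_swap: "((x::real)^2)^k = (x^k)^2"
  by (metis power_mult mult.commute)

lemma integrable_poly_normal: "integrable lborel (\<lambda>x. (1 + x^2) ^ n * std_normal_density x)"
proof -
  have e: "(\<lambda>x. (1 + x^2) ^ n * std_normal_density x) =
        (\<lambda>x. \<Sum>k\<le>n. real (n choose k) * (std_normal_density x * x ^ (2 * k)))"
  proof (rule ext)
    fix x :: real
    have "(1 + x^2) ^ n = (x^2 + 1) ^ n" by (simp add: add.commute)
    also have "\<dots> = (\<Sum>k\<le>n. real (n choose k) * (x^2) ^ k)"
      by (simp add: binomial_ring)
    finally have eq: "(1 + x^2) ^ n = (\<Sum>k\<le>n. real (n choose k) * (x^2) ^ k)" .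
    show "(1 + x^2) ^ n * std_normal_density x = (\<Sum>k\<le>n. real (n choose k) * (std_normal_density x * x ^ (2 * k)))"
      unfolding eq sum_distrib_right by (rule sum.cong) (simp_all add: power_mult pw_swap mult_ac)
  qed
  show ?thesis unfolding e
    by (intro Bochner_Integration.integrable_sum Bochner_Integration.integrable_mult_right integrable_std_normal_moment)
qed

lemma integrable_hermite_normal: "integrable lborel (\<lambda>x. hermite n x * std_normal_density x)"
proof (rule Bochner_Integration.integrable_bound)
  show "integrable lborel (\<lambda>x. fact n * ((1 + x^2) ^ n * std_normal_density x))"
    by (intro Bochner_Integration.integrable_mult_right integrable_poly_normal)
  show "(\<lambda>x. hermite n x * std_normal_density x) \<in> borel_measurable lborel" by measurable
  show "AE x in lborel. norm (hermite n x * std_normal_density x) \<le> norm (fact n * ((1 + x^2) ^ n * std_normal_density x))"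
  proof (rule AE_I2)
    fix x
    have "\<bar>hermite n x\<bar> * std_normal_density x \<le> fact n * (1 + x^2) ^ n * std_normal_density x"
      by (intro mult_right_mono hermite_bound normal_density_nonneg)
    then show "norm (hermite n x * std_normal_density x) \<le> norm (fact n * ((1 + x^2) ^ n * std_normal_density x))"
      by (simp add: abs_mult normal_density_nonneg mult.assoc)
  qed
qed

lemma hermite_normal_lim: "((\<lambda>x. hermite n x * std_normal_density x) \<longlongrightarrow> 0) at_top"
proof (rule tendsto_sandwich[where f = "\<lambda>x. - (fact n / sqrt (2*pi)) * ((1 + x^2) ^ n * exp (- (x ^ 2) / 2))"
                                and h = "\<lambda>x. (fact n / sqrt (2*pi)) * ((1 + x^2) ^ n * exp (- (x ^ 2) / 2))"])
  have L: "((\<lambda>x::real. (1 + x ^ 2) ^ n * exp (- (x ^ 2) / 2)) \<longlongrightarrow> 0) at_top" by real_asymp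
  show "((\<lambda>x. - (fact n / sqrt (2*pi)) * ((1 + x^2) ^ n * exp (- (x ^ 2) / 2))) \<longlongrightarrow> 0) at_top"
    using tendsto_mult_left[OF L, of "- (fact n / sqrt (2*pi))"] by simp
  show "((\<lambda>x. (fact n / sqrt (2*pi)) * ((1 + x^2) ^ n * exp (- (x ^ 2) / 2))) \<longlongrightarrow> 0) at_top"
    using tendsto_mult_left[OF L, of "(fact n / sqrt (2*pi))"] by simp
  have b: "\<bar>hermite n x * std_normal_density x\<bar> \<le> (fact n / sqrt (2*pi)) * ((1 + x^2) ^ n * exp (- (x ^ 2) / 2))" for x
  proof -
    have "\<bar>hermite n x * std_normal_density x\<bar> = \<bar>hermite n x\<bar> * std_normal_density x"
      by (simp add: abs_mult normal_density_nonneg)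
    also have "\<dots> \<le> fact n * (1 + x^2) ^ n * std_normal_density x"
      by (intro mult_right_mono hermite_bound normal_density_nonneg)
    also have "\<dots> = (fact n / sqrt (2*pi)) * ((1 + x^2) ^ n * exp (- (x ^ 2) / 2))"
      by (simp add: std_normal_density_def)
    finally show ?thesis .
  qed
  show "\<forall>\<^sub>F x in at_top. - (fact n / sqrt (2*pi)) * ((1 + x^2) ^ n * exp (- (x ^ 2) / 2)) \<le> hermite n x * std_normal_density x"
    using b by (intro always_eventually allI) (metis abs_le_D2 minus_le_iff mult_minus_left)
  show "\<forall>\<^sub>F x in at_top. hermite n x * std_normal_density x \<le> (fact n / sqrt (2*pi)) * ((1 + x^2) ^ n * exp (- (x ^ 2) / 2))"
    using b by (intro always_eventually allI) (metis abs_le_D1)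
qed




lemma std_normal_density_fun: "std_normal_density = (\<lambda>x. (1 / sqrt (2 * pi)) * exp (- x\<^sup>2 / 2))"
  by (rule ext) (simp add: std_normal_density_def)

lemma aux_cancel: "(s::real) > 0 \<Longrightarrow> a * (s * b) / (s * s) = a * b / s"
  by (simp add: field_simps)

lemma std_normal_deriv: "(std_normal_density has_real_derivative (- x * std_normal_density x)) (at x)"
proof -
  have s: "sqrt (pi * 2) * sqrt (pi * 2) = pi * 2" by simp
  have p: "sqrt (pi * 2) > 0" by simp
  have e: "x * (sqrt (pi * 2) * exp (- (x\<^sup>2 / 2))) / (pi * 2) = x * exp (- (x\<^sup>2 / 2)) / sqrt (pi * 2)"
    using aux_cancel[OF p, of x "exp (- (x\<^sup>2 / 2))"] unfolding s .
  show ?thesis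
    unfolding std_normal_density_fun
    by (auto intro!: derivative_eq_intros simp: algebra_simps e)
qed

lemma isCont_std_normal: "isCont std_normal_density x"
  using std_normal_deriv by (rule DERIV_isCont)

lemma antideriv_hermite:
  "((\<lambda>x. - hermite n x * std_normal_density x) has_real_derivative
      (hermite (Suc n) x * std_normal_density x)) (at x)"
proof -
  have D: "((\<lambda>x. - hermite n x * std_normal_density x) has_real_derivative
      (- hermite n x * (- x * std_normal_density x) + - (real n * hermite (n - 1) x) * std_normal_density x)) (at x)"
    by (rule DERIV_mult'[OF DERIV_minus[OF hermite_deriv] std_normal_deriv])
  have "- hermite n x * (- x * std_normal_density x) + - (real n * hermite (n - 1) x) * std_normal_density x
        = hermite (Suc n) x * std_normal_density x"
    by (simp add: hermite_rec algebra_simps)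
  with D show ?thesis by simp
qed

lemma integral_hermite_tail:
  "integral\<^sup>L lborel (\<lambda>x. hermite (Suc n) x * indicator {u..} x * std_normal_density x)
     = hermite n u * std_normal_density u"
proof -
  define f where "f x = hermite (Suc n) x * std_normal_density x" for x
  define F where "F x = - hermite n x * std_normal_density x" for x
  have fint: "integrable lborel f" unfolding f_def by (rule integrable_hermite_normal)
  have fm: "f \<in> borel_measurable borel" unfolding f_def by measurable
  have "integral\<^sup>L lborel (\<lambda>x. hermite (Suc n) x * indicator {u..} x * std_normal_density x)
       = integral\<^sup>L lborel (\<lambda>x. indicator (einterval (ereal u) \<infinity>) x *\<^sub>R f x)"
  proof (rule integral_cong_AE)
    show "(\<lambda>x. hermite (Suc n) x * indicator {u..} x * std_normal_density x) \<in> borel_measurable lborel"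
      by measurable
    show "(\<lambda>x. indicator (einterval (ereal u) \<infinity>) x *\<^sub>R f x) \<in> borel_measurable lborel"
      using fm by simp
    show "AE x in lborel. hermite (Suc n) x * indicator {u..} x * std_normal_density x =
            indicator (einterval (ereal u) \<infinity>) x *\<^sub>R f x"
      using AE_lborel_singleton[of u]
      by eventually_elim (auto simp: f_def indicator_def)
  qed
  also have "\<dots> = (LBINT x=ereal u..\<infinity>. f x)"
    by (simp add: interval_lebesgue_integral_le_eq set_lebesgue_integral_def)
  also have "\<dots> = 0 - F u"
  proof (rule interval_integral_FTC_integrable)
    show "ereal u < \<infinity>" by simp
    show "(F has_vector_derivative f x) (at x)" for x
      unfolding F_def f_def has_real_derivative_iff_has_vector_derivative[symmetric]
      by (rule antideriv_hermite)
    show "isCont f x" for x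
      unfolding f_def by (intro continuous_intros isCont_hermite isCont_std_normal)
    show "set_integrable lborel (einterval (ereal u) \<infinity>) f"
      unfolding set_integrable_def by (rule integrable_mult_indicator) (auto intro: fint)
    have Fc: "isCont F x" for x
      unfolding F_def by (intro continuous_intros isCont_hermite isCont_std_normal)
    show "((F \<circ> real_of_ereal) \<longlongrightarrow> F u) (at_right (ereal u))"
      unfolding ereal_tendsto_simps
      using Fc[of u] by (simp add: isCont_def filterlim_at_split)
    show "((F \<circ> real_of_ereal) \<longlongrightarrow> 0) (at_left \<infinity>)"
      unfolding ereal_tendsto_simps F_def
      using tendsto_minus[OF hermite_normal_lim[of n]] by simp
  qed
  finally show ?thesis by (simp add: F_def)
qed

lemma hermite_coeff_Suc:
  "hermite_coeff (indicator {u..}) (Suc n) = hermite n u * std_normal_density u / fact (Suc n)"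
  unfolding hermite_coeff_def using integral_hermite_tail[of n u] by simp




definition hc :: "real \<Rightarrow> nat \<Rightarrow> real" where "hc u n = hermite n u ^ 2 / fact n"
definition hS :: "real \<Rightarrow> nat \<Rightarrow> real" where "hS u n = (\<Sum>k<n. hc u k)"
definition hr :: "real \<Rightarrow> nat \<Rightarrow> real" where "hr u n = hermite (Suc n) u * hermite n u / fact n"

lemma hc_nonneg: "hc u n \<ge> 0"
  unfolding hc_def by simp

lemma hS_Suc: "hS u (Suc n) = hS u n + hc u n"
  unfolding hS_def by simp

lemma hS_nonneg: "hS u n \<ge> 0"
  unfolding hS_def by (intro sum_nonneg hc_nonneg)

lemma hS_ge1: "n \<ge> 1 \<Longrightarrow> hS u n \<ge> 1"
proof -
  assume "n \<ge> 1"
  then have "hc u 0 \<le> hS u n" unfolding hS_def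
    by (intro member_le_sum) (auto intro: hc_nonneg)
  moreover have "hc u 0 = 1" by (simp add: hc_def)
  ultimately show ?thesis by simp
qed

lemma hS_mono: "m \<le> n \<Longrightarrow> hS u m \<le> hS u n"
  unfolding hS_def by (intro sum_mono2) (auto intro: hc_nonneg)

lemma hc_Suc: "hc u (Suc n) = hermite (Suc n) u ^ 2 / (real (Suc n) * fact n)"
  by (simp only: hc_def fact_Suc)

lemma CD: "hS u (Suc n) * fact n =
   hermite (Suc n) u ^ 2 + real (Suc n) * hermite n u ^ 2 - u * hermite (Suc n) u * hermite n u"
proof (induction n)
  case 0
  then show ?case by (simp add: hS_def hc_def power2_eq_square)
next
  case (Suc n)
  define a where "a = hermite n u"
  define b where "b = hermite (Suc n) u"
  have h2: "hermite (Suc (Suc n)) u = u * b - real (Suc n) * a"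
    by (simp add: a_def b_def)
  have "hc u (Suc n) * fact (Suc n) = b ^ 2"
    by (simp add: hc_def b_def)
  then have "hS u (Suc (Suc n)) * fact (Suc n) = real (Suc n) * (hS u (Suc n) * fact n) + b ^ 2"
    by (simp add: hS_Suc algebra_simps)
  also have "\<dots> = real (Suc n) * (b ^ 2 + real (Suc n) * a ^ 2 - u * b * a) + b ^ 2"
    using Suc.IH by (simp add: a_def b_def)
  also have "\<dots> = hermite (Suc (Suc n)) u ^ 2 + real (Suc (Suc n)) * b ^ 2 - u * hermite (Suc (Suc n)) u * b"
    unfolding h2 by (simp add: algebra_simps power2_eq_square)
  finally show ?case by (simp add: b_def)
qed

lemma ident: "hS u (Suc n) = real (Suc n) * (hc u n + hc u (Suc n)) - u * hr u n"
proof -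
  have f: "fact n > (0::real)" by simp
  have "hS u (Suc n) = (hermite (Suc n) u ^ 2 + real (Suc n) * hermite n u ^ 2 - u * hermite (Suc n) u * hermite n u) / fact n"
    using CD[of u n] f by (simp add: field_simps)
  also have "\<dots> = real (Suc n) * (hc u n + hc u (Suc n)) - u * hr u n"
  proof -
    have "real (Suc n) \<noteq> 0" by simp
    then show ?thesis using f unfolding hc_Suc by (simp add: hc_def hr_def field_simps del: of_nat_Suc)
  qed
  finally show ?thesis .
qed

lemma hr_sq: "hr u n ^ 2 = real (Suc n) * hc u n * hc u (Suc n)"
proof -
  have f: "fact n > (0::real)" by simp
  have "real (Suc n) \<noteq> 0" by simp
  then show ?thesis using f unfolding hc_Suc by (simp add: hc_def hr_def field_simps power2_eq_square del: of_nat_Suc)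
qed

lemma ur_bound:
  assumes "u ^ 2 \<le> real (Suc n)"
  shows "\<bar>u * hr u n\<bar> \<le> real (Suc n) * (hc u n + hc u (Suc n)) / 2"
proof -
  define c where "c = hc u n"
  define d where "d = hc u (Suc n)"
  have c0: "c \<ge> 0" and d0: "d \<ge> 0" by (simp_all add: c_def d_def hc_nonneg)
  have cd: "4 * (c * d) \<le> (c + d) ^ 2"
    using zero_le_power2[of "c - d"] by (simp add: power2_eq_square algebra_simps)
  have "(u * hr u n) ^ 2 = u ^ 2 * (real (Suc n) * (c * d))"
    by (simp add: power_mult_distrib hr_sq c_def d_def mult_ac)
  also have "\<dots> \<le> real (Suc n) * (real (Suc n) * (c * d))"
    by (intro mult_right_mono assms) (simp add: c0 d0)
  also have "\<dots> \<le> real (Suc n) * (real (Suc n) * ((c + d) ^ 2 / 4))"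
    using cd by (intro mult_left_mono) auto
  also have "\<dots> = (real (Suc n) * (c + d) / 2) ^ 2"
    by (simp add: power2_eq_square)
  finally have "(u * hr u n) ^ 2 \<le> (real (Suc n) * (c + d) / 2) ^ 2" .
  then have "\<bar>u * hr u n\<bar> \<le> \<bar>real (Suc n) * (c + d) / 2\<bar>"
    by (metis abs_le_square_iff)
  then show ?thesis using c0 d0 by (simp add: c_def d_def)
qed

lemma x_upper:
  assumes "u ^ 2 \<le> real n" "2 \<le> n"
  shows "real n * (hc u n + hc u (Suc n)) \<le> 4 * hS u n"
proof -
  define X where "X = hc u n + hc u (Suc n)"
  have X0: "X \<ge> 0" by (simp add: X_def hc_nonneg add_nonneg_nonneg)
  have ub: "\<bar>u * hr u n\<bar> \<le> real (Suc n) * X / 2"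
    unfolding X_def using assms by (intro ur_bound) simp
  have "hS u n + hc u n = real (Suc n) * X - u * hr u n"
    using ident[of u n] by (simp add: hS_Suc X_def)
  moreover have "hc u n \<le> X" by (simp add: X_def hc_nonneg)
  ultimately have "real (Suc n) * X / 2 - X \<le> hS u n"
    using ub by linarith
  moreover have "real n * X \<ge> 2 * X" using assms X0
    by (intro mult_right_mono) auto
  ultimately show ?thesis unfolding X_def[symmetric] by (simp add: algebra_simps)
qed

lemma x_lower:
  assumes "u ^ 2 \<le> real n"
  shows "hS u (Suc n) \<le> 3 / 2 * real (Suc n) * (hc u n + hc u (Suc n))"
proof -
  have ub: "\<bar>u * hr u n\<bar> \<le> real (Suc n) * (hc u n + hc u (Suc n)) / 2"
    using assms by (intro ur_bound) simp
  then show ?thesis using ident[of u n] by linarith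
qed

definition heps :: "real \<Rightarrow> nat \<Rightarrow> real" where "heps u n = u * hr u n - hc u (Suc n)"

lemma eps_eq: "real n * (hc u n + hc u (Suc n)) = hS u n + heps u n"
  using ident[of u n] by (simp add: hS_Suc heps_def algebra_simps)

lemma lin_aux: "(a::real) \<le> b \<Longrightarrow> (m::real) \<le> k \<Longrightarrow> (a + b) / 2 + 2 * m \<le> b + 2 * k"
  by (simp add: field_simps)

lemma eps_bound:
  assumes "u ^ 2 \<le> real n" "2 \<le> n"
  shows "heps u n ^ 2 * real n \<le> 16 * (u ^ 2 + 2) * hS u n ^ 2"
proof -
  define c where "c = hc u n"
  define d where "d = hc u (Suc n)"
  define X where "X = c + d"
  have c0: "c \<ge> 0" and d0: "d \<ge> 0" by (simp_all add: c_def d_def hc_nonneg)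
  have X0: "X \<ge> 0" using c0 d0 by (simp add: X_def)
  have cd: "4 * (c * d) \<le> X ^ 2"
    using zero_le_power2[of "c - d"] by (simp add: X_def power2_eq_square algebra_simps)
  have ur2: "(u * hr u n) ^ 2 = u ^ 2 * (real (Suc n) * (c * d))"
    by (simp add: power_mult_distrib hr_sq c_def d_def mult_ac)
  have "(u * hr u n) ^ 2 \<le> u ^ 2 * (real (Suc n) * (X ^ 2 / 4))"
    unfolding ur2 using cd by (intro mult_left_mono) auto
  moreover have "d ^ 2 \<le> X ^ 2"
    using c0 d0 by (intro power_mono) (auto simp: X_def)
  moreover have "heps u n ^ 2 \<le> 2 * (u * hr u n) ^ 2 + 2 * d ^ 2"
    using zero_le_power2[of "u * hr u n + d"]
    by (simp add: heps_def d_def power2_eq_square algebra_simps)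
  moreover have "X ^ 2 * (u ^ 2 * real (Suc n) / 2 + 2) = 2 * (u ^ 2 * (real (Suc n) * (X ^ 2 / 4))) + 2 * X ^ 2"
    by (simp add: algebra_simps)
  ultimately have e1: "heps u n ^ 2 \<le> X ^ 2 * (u ^ 2 * real (Suc n) / 2 + 2)"
    by linarith
  have nn: "real n * (u ^ 2 * real (Suc n) / 2 + 2) \<le> real n ^ 2 * (u ^ 2 + 2)"
  proof -
    have nb: "real n \<le> real n ^ 2" using assms by (simp add: power2_eq_square)
    have A: "u ^ 2 * real n \<le> u ^ 2 * real n ^ 2" using nb by (intro mult_left_mono) auto
    have e1: "real n * (u ^ 2 * real (Suc n) / 2 + 2) = (u ^ 2 * real n + u ^ 2 * real n ^ 2) / 2 + 2 * real n"
      by (simp add: algebra_simps power2_eq_square)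
    have e2: "real n ^ 2 * (u ^ 2 + 2) = u ^ 2 * real n ^ 2 + 2 * real n ^ 2"
      by (simp add: algebra_simps)
    show ?thesis unfolding e1 e2 by (rule lin_aux[OF A nb])
  qed
  have "heps u n ^ 2 * real n \<le> X ^ 2 * (u ^ 2 * real (Suc n) / 2 + 2) * real n"
    using e1 by (intro mult_right_mono) auto
  also have "\<dots> = X ^ 2 * (real n * (u ^ 2 * real (Suc n) / 2 + 2))" by (simp add: mult_ac)
  also have "\<dots> \<le> X ^ 2 * (real n ^ 2 * (u ^ 2 + 2))"
    using nn by (intro mult_left_mono) auto
  also have "\<dots> = (real n * X) ^ 2 * (u ^ 2 + 2)" by (simp add: power_mult_distrib mult_ac)
  also have "\<dots> \<le> (4 * hS u n) ^ 2 * (u ^ 2 + 2)"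
  proof -
    have "real n * X \<le> 4 * hS u n" using x_upper[OF assms] by (simp add: X_def c_def d_def)
    moreover have "0 \<le> real n * X" using X0 by simp
    ultimately have "(real n * X) ^ 2 \<le> (4 * hS u n) ^ 2" by (intro power_mono) auto
    then show ?thesis by (intro mult_right_mono) auto
  qed
  also have "\<dots> = 16 * (u ^ 2 + 2) * hS u n ^ 2" by (simp add: power_mult_distrib)
  finally show ?thesis .
qed




lemma bounded_from_ratio:
  fixes T e :: "nat \<Rightarrow> real"
  assumes pos: "\<And>n. n \<ge> N \<Longrightarrow> T n > 0"
    and eb: "\<And>n. n \<ge> N \<Longrightarrow> \<bar>T (Suc (Suc n)) / T n - 1\<bar> \<le> e n"
    and e0: "\<And>n. e n \<ge> 0"
    and sm: "summable e"
  shows "\<exists>a A N'. a > 0 \<and> (\<forall>n\<ge>N'. a \<le> T n \<and> T n \<le> A)"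
proof -
  have "e \<longlonglongrightarrow> 0" using sm by (rule summable_LIMSEQ_zero)
  then have "eventually (\<lambda>n. e n < 1/2) sequentially"
    by (rule order_tendstoD) simp
  then obtain N2 where N2: "\<And>n. n \<ge> N2 \<Longrightarrow> e n < 1/2"
    by (auto simp: eventually_sequentially)
  define N1 where "N1 = max N N2"
  have step: "\<bar>ln (T (Suc (Suc n))) - ln (T n)\<bar> \<le> 2 * e n" if n: "n \<ge> N1" for n
  proof -
    define y where "y = T (Suc (Suc n)) / T n - 1"
    have Tp: "T n > 0" "T (Suc (Suc n)) > 0" using pos n by (auto simp: N1_def)
    have ye: "\<bar>y\<bar> \<le> e n" using eb n by (simp add: y_def N1_def)
    have yh: "\<bar>y\<bar> \<le> 1/2" using ye N2[of n] n by (simp add: N1_def)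
    have L: "ln (T (Suc (Suc n))) - ln (T n) = ln (1 + y)"
      using Tp by (simp add: y_def ln_div)
    moreover have "\<bar>ln (1 + y) - y\<bar> \<le> 2 * y\<^sup>2"
      using yh by (intro abs_ln_one_plus_x_minus_x_bound) auto
    moreover have "2 * y\<^sup>2 \<le> \<bar>y\<bar>"
    proof -
      have "\<bar>y\<bar> * \<bar>y\<bar> \<le> \<bar>y\<bar> * (1/2)" using yh by (intro mult_left_mono) auto
      then show ?thesis by (simp add: power2_eq_square abs_mult_self_eq)
    qed
    moreover have "\<bar>ln (1 + y)\<bar> - \<bar>y\<bar> \<le> \<bar>ln (1 + y) - y\<bar>" by (rule abs_triangle_ineq2)
    ultimately have "\<bar>ln (1 + y)\<bar> \<le> 2 * e n" using ye by linarith
    then show ?thesis unfolding L .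
  qed
  define M0 where "M0 = max \<bar>ln (T N1)\<bar> \<bar>ln (T (Suc N1))\<bar>"
  have smN: "summable (\<lambda>j. e (j + N1))"
    using sm by (rule summable_ignore_initial_segment)
  define E where "E = (\<Sum>j. e (j + N1))"
  have claim: "\<bar>ln (T (N1 + k))\<bar> \<le> M0 + 2 * (\<Sum>j<k. e (j + N1))" for k
  proof (induction k rule: less_induct)
    case (less k)
    show ?case
    proof (cases k)
      case 0
      then show ?thesis by (simp add: M0_def)
    next
      case (Suc k1)
      show ?thesis
      proof (cases k1)
        case 0
        have "0 \<le> (\<Sum>j<k. e (j + N1))" by (intro sum_nonneg e0)
        then show ?thesis using Suc 0 by (simp add: M0_def)
      next
        case (Suc j)
        have k: "k = Suc (Suc j)" using \<open>k = Suc k1\<close> Suc by simp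
        have IH: "\<bar>ln (T (N1 + j))\<bar> \<le> M0 + 2 * (\<Sum>i<j. e (i + N1))"
          using less.IH[of j] k by simp
        have eqk: "N1 + k = Suc (Suc (N1 + j))" by (simp add: k)
        have st: "\<bar>ln (T (N1 + k)) - ln (T (N1 + j))\<bar> \<le> 2 * e (j + N1)"
          unfolding eqk using step[of "N1 + j"] by (simp add: add.commute)
        have tri: "\<bar>ln (T (N1 + k))\<bar> - \<bar>ln (T (N1 + j))\<bar> \<le> \<bar>ln (T (N1 + k)) - ln (T (N1 + j))\<bar>"
          by (rule abs_triangle_ineq2)
        have sk: "(\<Sum>i<k. e (i + N1)) = (\<Sum>i<j. e (i + N1)) + e (j + N1) + e (Suc j + N1)"
          by (simp add: k)
        have "e (Suc j + N1) \<ge> 0" by (rule e0)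
        then show ?thesis unfolding sk distrib_left using IH st tri by linarith
      qed
    qed
  qed
  have bnd: "\<bar>ln (T n)\<bar> \<le> M0 + 2 * E" if "n \<ge> N1" for n
  proof -
    define k where "k = n - N1"
    have k: "n = N1 + k" using that by (simp add: k_def)
    have s: "(\<Sum>j<k. e (j + N1)) \<le> E"
      unfolding E_def by (rule sum_le_suminf[OF smN]) (auto intro: e0)
    have c: "\<bar>ln (T n)\<bar> \<le> M0 + 2 * (\<Sum>j<k. e (j + N1))" using claim[of k] k by simp
    show ?thesis using c s by linarith
  qed
  have H: "\<forall>n\<ge>N1. exp (- (M0 + 2 * E)) \<le> T n \<and> T n \<le> exp (M0 + 2 * E)"
  proof (intro allI impI)
    fix n assume n: "n \<ge> N1"
    have Tp: "T n > 0" using pos n by (simp add: N1_def)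
    have "- (M0 + 2 * E) \<le> ln (T n)" "ln (T n) \<le> M0 + 2 * E"
      using abs_le_D1[OF bnd[OF n]] abs_le_D2[OF bnd[OF n]] by linarith+
    then have "exp (- (M0 + 2 * E)) \<le> exp (ln (T n))" "exp (ln (T n)) \<le> exp (M0 + 2 * E)" by simp_all
    then show "exp (- (M0 + 2 * E)) \<le> T n \<and> T n \<le> exp (M0 + 2 * E)" using Tp by simp
  qed
  have "exp (- (M0 + 2 * E)) > 0" by simp
  with H show ?thesis by blast
qed




lemma ratio_alg:
  fixes S \<epsilon> n K :: real
  assumes S: "S > 0" and n: "n \<ge> 2" and K: "K \<ge> 0" and eb: "\<epsilon>\<^sup>2 * n \<le> K * S\<^sup>2"
  shows "\<bar>(S\<^sup>2 + 2 * (n + 1) * S * \<epsilon> + \<epsilon>\<^sup>2) / (n * (n + 2) * S\<^sup>2)\<bar> \<le> (1 + 4 * sqrt K + K) * n powr (-3/2)"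
proof -
  define \<rho> where "\<rho> = \<epsilon> / S"
  define w where "w = n powr (-1/2)"
  have n0: "n > 0" using n by simp
  have w0: "w > 0" using n0 by (simp add: w_def)
  have w2: "w\<^sup>2 = 1 / n"
  proof -
    have "w\<^sup>2 = n powr (-1/2) * n powr (-1/2)" by (simp add: w_def power2_eq_square)
    also have "\<dots> = n powr (-1/2 + -1/2)" by (simp only: powr_add)
    also have "\<dots> = n powr (-1)" by simp
    also have "\<dots> = 1 / n" using n0 by (simp add: powr_minus_divide)
    finally show ?thesis .
  qed
  have w3: "w ^ 3 = n powr (-3/2)"
  proof -
    have "n powr (-3/2) = n powr (-1 + -1/2)" by simp
    also have "\<dots> = n powr (-1) * w" unfolding w_def by (rule powr_add)
    also have "\<dots> = w\<^sup>2 * w" using n0 w2 by (simp add: powr_minus_divide)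
    finally show ?thesis by (simp add: power2_eq_square power3_eq_cube)
  qed
  have nw: "n * w\<^sup>2 = 1" using w2 n0 by simp
  have w1: "w \<le> 1"
  proof (rule ccontr)
    assume "\<not> w \<le> 1"
    then have "1 < w * w" using w0 by (metis less_1_mult linorder_not_le)
    then have "1 < w\<^sup>2" by (simp add: power2_eq_square)
    then show False using w2 n by (simp add: field_simps)
  qed
  have rho2: "\<rho>\<^sup>2 \<le> K * w\<^sup>2"
  proof -
    have "\<rho>\<^sup>2 * n \<le> K" using eb S by (simp add: \<rho>_def power_divide field_simps)
    moreover have "\<rho>\<^sup>2 = (\<rho>\<^sup>2 * n) * w\<^sup>2" using nw by (metis mult.assoc mult_1_right)
    ultimately show ?thesis by (metis mult_right_mono zero_le_power2)
  qed
  have rho1: "\<bar>\<rho>\<bar> \<le> sqrt K * w"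
  proof -
    have "\<rho>\<^sup>2 \<le> (sqrt K * w)\<^sup>2" using rho2 K by (simp add: power_mult_distrib)
    then have "\<bar>\<rho>\<bar> \<le> \<bar>sqrt K * w\<bar>" by (metis abs_le_square_iff)
    then show ?thesis using w0 K by simp
  qed
  have eq: "(S\<^sup>2 + 2 * (n + 1) * S * \<epsilon> + \<epsilon>\<^sup>2) / (n * (n + 2) * S\<^sup>2) = (1 + 2 * (n + 1) * \<rho> + \<rho>\<^sup>2) / (n * (n + 2))"
  proof -
    have "(1 + 2 * (n + 1) * \<rho> + \<rho>\<^sup>2) * S\<^sup>2 = S\<^sup>2 + 2 * (n + 1) * S * \<epsilon> + \<epsilon>\<^sup>2"
      using S unfolding \<rho>_def power2_eq_square by (simp add: field_simps)
    then have "(S\<^sup>2 + 2 * (n + 1) * S * \<epsilon> + \<epsilon>\<^sup>2) / (n * (n + 2) * S\<^sup>2) = ((1 + 2 * (n + 1) * \<rho> + \<rho>\<^sup>2) * S\<^sup>2) / ((n * (n + 2)) * S\<^sup>2)"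
      by simp
    also have "\<dots> = (1 + 2 * (n + 1) * \<rho> + \<rho>\<^sup>2) / (n * (n + 2))"
      using S by (intro mult_divide_mult_cancel_right) simp
    finally show ?thesis .
  qed
  have num: "\<bar>1 + 2 * (n + 1) * \<rho> + \<rho>\<^sup>2\<bar> \<le> 1 + 2 * (n + 1) * \<bar>\<rho>\<bar> + \<rho>\<^sup>2"
  proof -
    have A: "\<bar>2 * (n + 1) * \<rho>\<bar> = 2 * (n + 1) * \<bar>\<rho>\<bar>" using n0 by (simp add: abs_mult)
    have B: "2 * (n + 1) * \<rho> \<le> \<bar>2 * (n + 1) * \<rho>\<bar>" "- (2 * (n + 1) * \<rho>) \<le> \<bar>2 * (n + 1) * \<rho>\<bar>" by simp_all
    have C: "0 \<le> \<rho>\<^sup>2" by simp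
    show ?thesis unfolding abs_le_iff using A B C by linarith
  qed
  have "\<bar>(1 + 2 * (n + 1) * \<rho> + \<rho>\<^sup>2) / (n * (n + 2))\<bar> \<le> (1 + 2 * (n + 1) * \<bar>\<rho>\<bar> + \<rho>\<^sup>2) / (n * (n + 2))"
  proof -
    have d: "n * (n + 2) > 0" using n0 by simp
    have "\<bar>(1 + 2 * (n + 1) * \<rho> + \<rho>\<^sup>2) / (n * (n + 2))\<bar> = \<bar>1 + 2 * (n + 1) * \<rho> + \<rho>\<^sup>2\<bar> / (n * (n + 2))"
      using d by (simp add: abs_divide)
    also have "\<dots> \<le> (1 + 2 * (n + 1) * \<bar>\<rho>\<bar> + \<rho>\<^sup>2) / (n * (n + 2))"
      using d \<open>\<bar>1 + 2 * (n + 1) * \<rho> + \<rho>\<^sup>2\<bar> \<le> 1 + 2 * (n + 1) * \<bar>\<rho>\<bar> + \<rho>\<^sup>2\<close>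
      by (intro divide_right_mono) auto
    finally show ?thesis .
  qed
  also have "\<dots> \<le> (1 + 2 * (n + 1) * \<bar>\<rho>\<bar> + \<rho>\<^sup>2) / (n * n)"
    using n0 by (intro divide_left_mono) (auto intro: add_nonneg_nonneg)
  also have "\<dots> = w ^ 4 * (1 + 2 * (n + 1) * \<bar>\<rho>\<bar> + \<rho>\<^sup>2)"
  proof -
    have "w ^ 4 = w\<^sup>2 * w\<^sup>2" by (simp add: power4_eq_xxxx power2_eq_square)
    then have "w ^ 4 = 1 / (n * n)" using w2 by simp
    then show ?thesis by simp
  qed
  also have "\<dots> \<le> (1 + 4 * sqrt K + K) * w ^ 3"
  proof -
    have a: "w ^ 4 \<le> w ^ 3" using w0 w1 by (intro power_decreasing) auto
    have b: "w ^ 4 * (2 * (n + 1) * \<bar>\<rho>\<bar>) \<le> 4 * sqrt K * w ^ 3"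
    proof -
      have "w ^ 4 * (2 * (n + 1) * \<bar>\<rho>\<bar>) \<le> w ^ 4 * (4 * n * \<bar>\<rho>\<bar>)"
        using n w0 by (intro mult_left_mono mult_right_mono) auto
      also have "\<dots> = 4 * \<bar>\<rho>\<bar> * w\<^sup>2 * (n * w\<^sup>2)" by (simp add: power2_eq_square power4_eq_xxxx mult_ac)
      also have "\<dots> = 4 * \<bar>\<rho>\<bar> * w\<^sup>2" using nw by simp
      also have "\<dots> \<le> 4 * (sqrt K * w) * w\<^sup>2" using rho1 w0 by (intro mult_right_mono mult_left_mono) auto
      also have "\<dots> = 4 * sqrt K * w ^ 3" by (simp add: power2_eq_square power3_eq_cube mult_ac)
      finally show ?thesis .
    qed
    have c: "w ^ 4 * \<rho>\<^sup>2 \<le> K * w ^ 3"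
    proof -
      have "w ^ 4 * \<rho>\<^sup>2 \<le> w ^ 4 * (K * w\<^sup>2)" using rho2 w0 by (intro mult_left_mono) auto
      also have "\<dots> = K * w ^ 3 * w ^ 3" by (simp add: power2_eq_square power3_eq_cube power4_eq_xxxx mult_ac)
      also have "\<dots> \<le> K * w ^ 3 * 1"
        using K w0 w1 by (intro mult_left_mono) (auto simp: power_le_one)
      finally show ?thesis by simp
    qed
    have "w ^ 4 * (1 + 2 * (n + 1) * \<bar>\<rho>\<bar> + \<rho>\<^sup>2) = w ^ 4 + w ^ 4 * (2 * (n + 1) * \<bar>\<rho>\<bar>) + w ^ 4 * \<rho>\<^sup>2"
      by (simp add: algebra_simps)
    also have "\<dots> \<le> w ^ 3 + 4 * sqrt K * w ^ 3 + K * w ^ 3" using a b c by linarith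
    also have "\<dots> = (1 + 4 * sqrt K + K) * w ^ 3" by (simp add: algebra_simps)
    finally show ?thesis .
  qed
  finally show ?thesis unfolding eq w3 .
qed




lemma ratio_identity:
  fixes S \<epsilon> n :: real
  assumes S: "S > 0" and n: "n > 0"
  shows "((S + (S + \<epsilon>) / n)\<^sup>2 / (n + 2)) / (S\<^sup>2 / n) - 1 = (S\<^sup>2 + 2 * (n + 1) * S * \<epsilon> + \<epsilon>\<^sup>2) / (n * (n + 2) * S\<^sup>2)"
proof -
  have n2: "n + 2 \<noteq> 0" "S \<noteq> 0" "n \<noteq> 0" using n S by auto
  show ?thesis using n2 by (simp add: divide_simps) (simp add: algebra_simps power2_eq_square)
qed

lemma S_bounds:
  "\<exists>a A N. a > 0 \<and> (\<forall>n\<ge>N. a * real n \<le> hS u n ^ 2 \<and> hS u n ^ 2 \<le> A * real n)"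
proof -
  define K where "K = 16 * (u ^ 2 + 2)"
  define C where "C = 1 + 4 * sqrt K + K"
  define N0 where "N0 = max 2 (nat \<lceil>u ^ 2\<rceil>)"
  define T where "T n = hS u n ^ 2 / real n" for n
  define e where "e n = C * real n powr (-3/2)" for n
  have K0: "K \<ge> 0" by (simp add: K_def)
  have C0: "C \<ge> 0" using K0 by (simp add: C_def)
  have big: "u ^ 2 \<le> real n" "2 \<le> n" if "n \<ge> N0" for n
  proof -
    show "u ^ 2 \<le> real n" using that by (simp add: N0_def)
    show "2 \<le> n" using that by (simp add: N0_def)
  qed
  have Spos: "hS u n > 0" if "n \<ge> 1" for n using hS_ge1[OF that, of u] by simp
  have Tpos: "T n > 0" if "n \<ge> N0" for n
    using Spos[of n] big[OF that] by (simp add: T_def)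
  have eb: "\<bar>T (Suc (Suc n)) / T n - 1\<bar> \<le> e n" if nN: "n \<ge> N0" for n
  proof -
    note bg = big[OF nN]
    define S where "S = hS u n"
    define \<epsilon> where "\<epsilon> = heps u n"
    have S0: "S > 0" using Spos[of n] bg by (simp add: S_def)
    have n0: "real n > 0" using bg by simp
    have X: "hc u n + hc u (Suc n) = (S + \<epsilon>) / real n"
      using eps_eq[of n u] n0 by (simp add: S_def \<epsilon>_def field_simps)
    have S2: "hS u (Suc (Suc n)) = S + (S + \<epsilon>) / real n"
      using X by (simp add: hS_Suc S_def)
    have "T (Suc (Suc n)) / T n - 1 = ((S + (S + \<epsilon>) / real n)\<^sup>2 / (real n + 2)) / (S\<^sup>2 / real n) - 1"
      by (simp add: T_def S2 S_def add.commute)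
    also have "\<dots> = (S\<^sup>2 + 2 * (real n + 1) * S * \<epsilon> + \<epsilon>\<^sup>2) / (real n * (real n + 2) * S\<^sup>2)"
      by (rule ratio_identity[OF S0 n0])
    finally have eq: "T (Suc (Suc n)) / T n - 1 = (S\<^sup>2 + 2 * (real n + 1) * S * \<epsilon> + \<epsilon>\<^sup>2) / (real n * (real n + 2) * S\<^sup>2)" .
    have epsb: "\<epsilon>\<^sup>2 * real n \<le> K * S\<^sup>2"
      using eps_bound[OF bg] by (simp add: K_def S_def \<epsilon>_def)
    have "real n \<ge> 2" using bg by simp
    from ratio_alg[OF S0 this K0 epsb] show ?thesis
      unfolding eq e_def C_def .
  qed
  have e0: "e n \<ge> 0" for n using C0 by (simp add: e_def)
  have sm: "summable e"
    unfolding e_def by (intro summable_mult) (simp add: summable_real_powr_iff)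
  obtain a A N' where aA: "a > 0" "\<forall>n\<ge>N'. a \<le> T n \<and> T n \<le> A"
    using bounded_from_ratio[of N0 T e, OF Tpos eb e0 sm] by blast
  have "\<forall>n\<ge>max N' 1. a * real n \<le> hS u n ^ 2 \<and> hS u n ^ 2 \<le> A * real n"
  proof (intro allI impI)
    fix n assume n: "n \<ge> max N' 1"
    have n0: "real n > 0" using n by simp
    have "a \<le> hS u n ^ 2 / real n" "hS u n ^ 2 / real n \<le> A" using aA n by (auto simp: T_def)
    then show "a * real n \<le> hS u n ^ 2 \<and> hS u n ^ 2 \<le> A * real n"
      using n0 by (simp add: field_simps)
  qed
  then show ?thesis using aA(1) by blast
qed




lemma powr_ge_inv_sqrt:
  fixes m s :: real
  assumes "m \<ge> 1" "s \<ge> -1/2"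
  shows "1 / sqrt m \<le> m powr s"
proof -
  have "m powr (-1/2) \<le> m powr s" using assms by (intro powr_mono) auto
  moreover have "m powr (-1/2) = 1 / sqrt m"
  proof -
    have "m powr (-1/2) = m powr (-(1/2))" by simp
    also have "\<dots> = 1 / m powr (1/2)" by (rule powr_minus_divide)
    also have "\<dots> = 1 / sqrt m" using assms by (simp add: powr_half_sqrt)
    finally show ?thesis .
  qed
  ultimately show ?thesis by simp
qed

lemma sqrt_div_self: "(n::real) > 0 \<Longrightarrow> sqrt n / n = n powr (-1/2)"
proof -
  assume n: "n > 0"
  have "n powr (-1/2) = n powr (1/2 - 1)" by simp
  also have "\<dots> = n powr (1/2) / n powr 1" by (rule powr_diff)
  also have "\<dots> = sqrt n / n" using n by (simp add: powr_half_sqrt)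
  finally show ?thesis by simp
qed

lemma alg2: "(q::real) \<noteq> 0 \<Longrightarrow> m \<noteq> 0 \<Longrightarrow> 1 / q * (2 / 3 * (s * p) / m) = s / 3 * (2 * p / (q * m))"
  by (simp add: field_simps)

lemma alg3: "(d::real) > 0 \<Longrightarrow> e > 0 \<Longrightarrow> d \<le> 2 * p * e \<Longrightarrow> inverse e \<le> 2 * p / d"
  by (simp add: field_simps)

lemma alg4: "s \<le> 3 / 2 * b * X \<Longrightarrow> (b::real) > 0 \<Longrightarrow> 2 / 3 * s / b \<le> X"
  by (simp add: field_simps)

lemma key_ineq:
  fixes n a :: real
  assumes n: "n \<ge> 1" and a: "a > 0"
  shows "sqrt a / 3 * inverse (n + 2) \<le> (1 / sqrt (n + 2)) * (2 / 3 * sqrt (a * n) / (n + 1))"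
proof -
  define p where "p = sqrt n"
  define q where "q = sqrt (n + 2)"
  have p0: "p > 0" and q0: "q > 0" using n by (simp_all add: p_def q_def)
  have pp: "p * p = n" and qq: "q * q = n + 2" using n by (simp_all add: p_def q_def)
  have "(n + 1) ^ 2 \<le> (2 * p * q) ^ 2"
  proof -
    have "(2 * p * q) ^ 2 = 4 * (p * p) * (q * q)" by (simp add: power2_eq_square mult_ac)
    also have "\<dots> = 4 * n * (n + 2)" by (simp add: pp qq)
    finally have e0: "(2 * p * q) ^ 2 = 4 * n * (n + 2)" .
    have e1: "(n + 1) ^ 2 = n ^ 2 + 2 * n + 1" by (simp add: power2_eq_square algebra_simps)
    have e2: "4 * n * (n + 2) = 4 * n ^ 2 + 8 * n" by (simp add: power2_eq_square algebra_simps)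
    have "1 \<le> n ^ 2" using n by (simp add: one_le_power)
    then show ?thesis unfolding e0 e1 e2 using n by linarith
  qed
  then have pq: "n + 1 \<le> 2 * p * q"
    by (rule power2_le_imp_le) (use p0 q0 in auto)
  have sq: "sqrt (a * n) = sqrt a * p" by (simp add: p_def real_sqrt_mult)
  have rhs: "(1 / sqrt (n + 2)) * (2 / 3 * sqrt (a * n) / (n + 1)) = sqrt a / 3 * (2 * p / (q * (n + 1)))"
    unfolding sq q_def[symmetric] by (rule alg2) (use q0 n in auto)
  have "inverse (n + 2) \<le> 2 * p / (q * (n + 1))"
  proof -
    have "q * (n + 1) \<le> q * (2 * p * q)" using pq q0 by (intro mult_left_mono) auto
    also have "\<dots> = 2 * p * (q * q)" by (simp add: mult_ac)
    also have "\<dots> = 2 * p * (n + 2)" by (simp only: qq)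
    finally have "q * (n + 1) \<le> 2 * p * (n + 2)" .
    moreover have "q * (n + 1) > 0" using q0 n by simp
    moreover have "n + 2 > 0" using n by simp
    ultimately show ?thesis by (intro alg3) auto
  qed
  then show ?thesis unfolding rhs using a by (intro mult_left_mono) auto
qed

lemma summable_hc_iff: "summable (\<lambda>n. real (Suc n) powr s * hc u n) \<longleftrightarrow> s < -1/2"
proof -
  obtain a A N where aA: "a > 0" "\<And>n. n \<ge> N \<Longrightarrow> a * real n \<le> hS u n ^ 2 \<and> hS u n ^ 2 \<le> A * real n"
    using S_bounds[of u] by blast
  define M where "M = max N (max 2 (nat \<lceil>u ^ 2\<rceil>))"
  have bigM: "u ^ 2 \<le> real n" "2 \<le> n" "n \<ge> N" if "n \<ge> M" for n
    using that by (auto simp: M_def)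
  show ?thesis
  proof
    assume sm: "summable (\<lambda>n. real (Suc n) powr s * hc u n)"
    show "s < -1/2"
    proof (rule ccontr)
      assume "\<not> s < -1/2"
      then have s: "s \<ge> -1/2" by simp
      define f where "f n = real (Suc n) powr s * hc u n" for n
      have smf: "summable f" using sm unfolding f_def[abs_def] .
      have smf1: "summable (\<lambda>n. f (n + 1))" using smf by (subst summable_iff_shift)
      have smg: "summable (\<lambda>n. f n + f (n + 1))" using smf smf1 by (rule summable_add)
      have lb: "sqrt a / 3 * inverse (real n + 2) \<le> f n + f (n + 1)" if nM: "n \<ge> M" for n
      proof -
        note bg = bigM[OF nM]
        have n1: "real n \<ge> 1" using bg by simp
        define X where "X = hc u n + hc u (Suc n)"
        have w1: "1 / sqrt (real n + 2) \<le> real (Suc n) powr s"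
        proof -
          have "1 / sqrt (real n + 2) \<le> 1 / sqrt (real (Suc n))"
            by (intro divide_left_mono real_sqrt_le_mono) auto
          also have "\<dots> \<le> real (Suc n) powr s" using s by (intro powr_ge_inv_sqrt) auto
          finally show ?thesis .
        qed
        have w2: "1 / sqrt (real n + 2) \<le> real (Suc (Suc n)) powr s"
        proof -
          have "1 / sqrt (real n + 2) = 1 / sqrt (real (Suc (Suc n)))" by simp
          also have "\<dots> \<le> real (Suc (Suc n)) powr s" using s by (intro powr_ge_inv_sqrt) auto
          finally show ?thesis .
        qed
        have fn1: "f (n + 1) = real (Suc (Suc n)) powr s * hc u (Suc n)" by (simp add: f_def)
        have "1 / sqrt (real n + 2) * hc u n \<le> f n"
          unfolding f_def using w1 hc_nonneg[of u n] by (rule mult_right_mono)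
        moreover have "1 / sqrt (real n + 2) * hc u (Suc n) \<le> f (n + 1)"
          unfolding fn1 using w2 hc_nonneg[of u "Suc n"] by (rule mult_right_mono)
        ultimately have "f n + f (n + 1) \<ge> 1 / sqrt (real n + 2) * hc u n + 1 / sqrt (real n + 2) * hc u (Suc n)"
          by linarith
        then have g1: "f n + f (n + 1) \<ge> 1 / sqrt (real n + 2) * X" by (simp add: X_def add_divide_distrib)
        have "sqrt (a * real n) \<le> sqrt (hS u n ^ 2)"
          using aA(2)[OF bg(3)] by (intro real_sqrt_le_mono) auto
        also have "\<dots> = hS u n" using hS_nonneg[of u n] by simp
        also have "\<dots> \<le> hS u (Suc n)" by (rule hS_mono) simp
        also have "\<dots> \<le> 3 / 2 * real (Suc n) * X" unfolding X_def by (rule x_lower[OF bg(1)])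
        finally have H0: "sqrt (a * real n) \<le> 3 / 2 * real (Suc n) * X" .
        have rs: "real (Suc n) = real n + 1" by simp
        from H0 have "sqrt (a * real n) \<le> 3 / 2 * (real n + 1) * X" unfolding rs .
        then have X1: "2 / 3 * sqrt (a * real n) / (real n + 1) \<le> X"
          by (rule alg4) (use n1 in auto)
        have "sqrt a / 3 * inverse (real n + 2) \<le> (1 / sqrt (real n + 2)) * (2 / 3 * sqrt (a * real n) / (real n + 1))"
          by (rule key_ineq[OF n1 aA(1)])
        also have "\<dots> \<le> 1 / sqrt (real n + 2) * X"
          using X1 by (intro mult_left_mono) auto
        finally show ?thesis using g1 by linarith
      qed
      have "summable (\<lambda>n. sqrt a / 3 * inverse (real n + 2))"
      proof (rule summable_comparison_test_ev[OF _ smg])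
        show "\<forall>\<^sub>F n in sequentially. norm (sqrt a / 3 * inverse (real n + 2)) \<le> f n + f (n + 1)"
          unfolding eventually_sequentially
          using lb aA(1) by (intro exI[of _ M]) auto
      qed
      then have "summable (\<lambda>n. inverse (real n + 2))"
        using aA(1) by (subst (asm) summable_cmult_iff) auto
      then have "summable (\<lambda>n. inverse (real (n + 2)))" by (simp add: add.commute)
      then have "summable (\<lambda>n. inverse (real n))"
        by (subst (asm) summable_iff_shift[where f = "\<lambda>n. inverse (real n)"])
      then show False using not_summable_harmonic by blast
    qed
  next
    assume s: "s < -1/2"
    show "summable (\<lambda>n. real (Suc n) powr s * hc u n)"
    proof (rule summable_comparison_test_ev)
      show "summable (\<lambda>n. 4 * sqrt A * real n powr (s - 1/2))"
        using s by (intro summable_mult) (simp add: summable_real_powr_iff)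
      show "\<forall>\<^sub>F n in sequentially. norm (real (Suc n) powr s * hc u n) \<le> 4 * sqrt A * real n powr (s - 1/2)"
        unfolding eventually_sequentially
      proof (intro exI[of _ M] allI impI)
        fix n assume nM: "n \<ge> M"
        note bg = bigM[OF nM]
        have n0: "real n > 0" using bg by simp
        have h1: "hc u n \<le> 4 * hS u n / real n"
        proof -
          have "real n * (hc u n + hc u (Suc n)) \<le> 4 * hS u n" by (rule x_upper[OF bg(1,2)])
          moreover have "real n * hc u n \<le> real n * (hc u n + hc u (Suc n))"
            using hc_nonneg[of u "Suc n"] n0 by (intro mult_left_mono) auto
          ultimately have "real n * hc u n \<le> 4 * hS u n" by linarith
          then show ?thesis using n0 by (simp add: field_simps)
        qed
        have h2: "hS u n \<le> sqrt A * sqrt (real n)"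
        proof -
          have "hS u n \<le> sqrt (A * real n)" using aA(2)[OF bg(3)] by (intro real_le_rsqrt) auto
          then show ?thesis by (simp add: real_sqrt_mult)
        qed
        have h3: "hc u n \<le> 4 * sqrt A * real n powr (-1/2)"
        proof -
          have "4 * hS u n / real n \<le> 4 * (sqrt A * sqrt (real n)) / real n"
            using h2 n0 by (intro divide_right_mono) auto
          also have "\<dots> = 4 * sqrt A * (sqrt (real n) / real n)" by simp
          also have "\<dots> = 4 * sqrt A * real n powr (-1/2)" using n0 by (simp add: sqrt_div_self)
          finally show ?thesis using h1 by linarith
        qed
        have h4: "real (Suc n) powr s \<le> real n powr s"
          using s n0 by (intro powr_mono2') auto
        have "norm (real (Suc n) powr s * hc u n) = real (Suc n) powr s * hc u n"
          using hc_nonneg[of u n] by simp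
        also have "\<dots> \<le> real n powr s * (4 * sqrt A * real n powr (-1/2))"
          using h3 h4 hc_nonneg[of u n] by (intro mult_mono) auto
        also have "\<dots> = 4 * sqrt A * (real n powr s * real n powr (-1/2))" by (simp add: mult_ac)
        also have "\<dots> = 4 * sqrt A * real n powr (s - 1/2)" by (simp add: powr_add[symmetric])
        finally show "norm (real (Suc n) powr s * hc u n) \<le> 4 * sqrt A * real n powr (s - 1/2)" .
      qed
    qed
  qed
qed




lemma pow_ratio: "(m::real) > 0 \<Longrightarrow> m ^ p / m = m powr (real p - 1 - \<beta>) / m powr (- \<beta>)"
proof -
  assume m: "m > 0"
  have "m powr (real p - 1 - \<beta>) / m powr (- \<beta>) = m powr ((real p - 1 - \<beta>) - (- \<beta>))"
    by (rule powr_diff[symmetric])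
  also have "\<dots> = m powr (real p - 1)" by simp
  also have "\<dots> = m powr (real p) / m powr 1" by (rule powr_diff)
  also have "\<dots> = m ^ p / m" using m by (simp add: powr_realpow)
  finally show ?thesis by simp
qed

lemma G_identity:
  fixes km :: "nat \<Rightarrow> real"
  shows "real (Suc n) ^ p * fact (Suc n) * (hermite_coeff (indicator {u..}) (Suc n))\<^sup>2 * km (Suc n)
     = (std_normal_density u)\<^sup>2 * (real (Suc n) powr (real p - 1 - \<beta>) * hc u n) * (km (Suc n) / real (Suc n) powr (- \<beta>))"
proof -
  define m where "m = real (Suc n)"
  define H where "H = hermite n u"
  define \<phi> where "\<phi> = std_normal_density u"
  have m0: "m > 0" by (simp add: m_def)
  have fS: "(fact (Suc n) :: real) = m * fact n" by (simp add: m_def)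
  have f0: "(fact n :: real) > 0" by simp
  have "real (Suc n) ^ p * fact (Suc n) * (hermite_coeff (indicator {u..}) (Suc n))\<^sup>2 * km (Suc n)
        = m ^ p * (m * fact n) * (H * \<phi> / (m * fact n))\<^sup>2 * km (Suc n)"
    by (simp add: hermite_coeff_Suc m_def H_def \<phi>_def fS[unfolded m_def])
  also have "\<dots> = \<phi>\<^sup>2 * (m ^ p / m) * (H\<^sup>2 / fact n) * km (Suc n)"
    using m0 f0 by (simp add: field_simps power2_eq_square)
  also have "\<dots> = \<phi>\<^sup>2 * (m powr (real p - 1 - \<beta>) * hc u n) * (km (Suc n) / m powr (- \<beta>))"
    using m0 f0 by (simp add: pow_ratio[OF m0, of p \<beta>] hc_def H_def field_simps)
  finally show ?thesis by (simp add: m_def \<phi>_def)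
qed

theorem theorem1:
  fixes M :: "'a measure" and P :: "'w measure" and B :: "'a \<Rightarrow> 'w \<Rightarrow> real"
    and \<beta> :: real and u :: real and p :: nat
  assumes "finite_measure M"
    and "std_gaussian_field M P B"
    and "\<beta> > 0"
    and "asymp_comparable (kernel_moment M (cov_kernel P B)) (\<lambda>q. real q powr (- \<beta>))"
  shows "in_D_p2 M (cov_kernel P B) (indicator {u..}) p \<longleftrightarrow> real p < \<beta> + 1 / 2"
proof -
  define km where "km = kernel_moment M (cov_kernel P B)"
  define G where "G q = real q ^ p * fact q * (hermite_coeff (indicator {u..}) q)\<^sup>2 * km q" for q
  define s where "s = real p - 1 - \<beta>"
  define h where "h n = real (Suc n) powr s * hc u n" for n
  define R where "R n = km (Suc n) / real (Suc n) powr (- \<beta>)" for n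
  define \<phi> where "\<phi> = std_normal_density u"
  have "\<phi> > 0" unfolding \<phi>_def by (rule normal_density_pos) simp
  then have \<phi>0: "\<phi>\<^sup>2 > 0" by simp
  from assms(4) obtain C1 C2 where
    ev0: "\<forall>\<^sub>F q in sequentially. km q > 0 \<and> real q powr (- \<beta>) > 0" and
    ev1: "\<forall>\<^sub>F q in sequentially. km q / real q powr (- \<beta>) \<le> C1" and
    ev2: "\<forall>\<^sub>F q in sequentially. real q powr (- \<beta>) / km q \<le> C2"
    unfolding asymp_comparable_def km_def by blast
  have evR: "\<forall>\<^sub>F n in sequentially. R n > 0 \<and> R n \<le> C1 \<and> 1 / R n \<le> C2"
  proof -
    define Q where "Q q = ((km q > 0 \<and> real q powr (- \<beta>) > 0) \<and> km q / real q powr (- \<beta>) \<le> C1 \<and> real q powr (- \<beta>) / km q \<le> C2)" for q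
    have "eventually Q sequentially"
      unfolding Q_def[abs_def] by (rule eventually_conj[OF ev0 eventually_conj[OF ev1 ev2]])
    then have "\<forall>\<^sub>F n in sequentially. Q (Suc n)"
      using eventually_sequentially_Suc[of Q] by blast
    then show ?thesis
      by eventually_elim (auto simp: R_def Q_def simp del: of_nat_Suc)
  qed
  have Gid: "G (Suc n) = \<phi>\<^sup>2 * h n * R n" for n
    unfolding G_def h_def R_def \<phi>_def s_def by (rule G_identity)
  have hn: "h n \<ge> 0" for n by (simp add: h_def hc_nonneg)
  have "summable G \<longleftrightarrow> summable (\<lambda>n. G (Suc n))" by (rule summable_Suc_iff[symmetric])
  also have "\<dots> \<longleftrightarrow> summable h"
  proof
    assume sG: "summable (\<lambda>n. G (Suc n))"
    show "summable h"
    proof (rule summable_comparison_test_ev)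
      show "summable (\<lambda>n. C2 / \<phi>\<^sup>2 * G (Suc n))" using sG by (rule summable_mult)
      show "\<forall>\<^sub>F n in sequentially. norm (h n) \<le> C2 / \<phi>\<^sup>2 * G (Suc n)"
        using evR
      proof eventually_elim
        case (elim n)
        then have R0: "R n > 0" and R2: "1 / R n \<le> C2" by auto
        have "norm (h n) = h n" using hn[of n] by simp
        also have "\<dots> = (1 / R n) * (G (Suc n) / \<phi>\<^sup>2)" using R0 \<phi>0 by (simp add: Gid field_simps)
        also have "\<dots> \<le> C2 * (G (Suc n) / \<phi>\<^sup>2)"
          using R2 R0 \<phi>0 hn[of n] by (intro mult_right_mono) (auto simp: Gid)
        finally show ?case by simp
      qed
    qed
  next
    assume sh: "summable h"
    show "summable (\<lambda>n. G (Suc n))"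
    proof (rule summable_comparison_test_ev)
      show "summable (\<lambda>n. \<phi>\<^sup>2 * C1 * h n)" using sh by (rule summable_mult)
      show "\<forall>\<^sub>F n in sequentially. norm (G (Suc n)) \<le> \<phi>\<^sup>2 * C1 * h n"
        using evR
      proof eventually_elim
        case (elim n)
        then have R0: "R n > 0" and R1: "R n \<le> C1" by auto
        have "norm (G (Suc n)) = \<phi>\<^sup>2 * h n * R n" using R0 \<phi>0 hn[of n] by (simp add: Gid)
        also have "\<dots> \<le> \<phi>\<^sup>2 * h n * C1"
          using R1 \<phi>0 hn[of n] by (intro mult_left_mono) auto
        finally show ?case by (simp add: mult_ac)
      qed
    qed
  qed
  also have "\<dots> \<longleftrightarrow> s < -1/2" unfolding h_def by (rule summable_hc_iff)
  also have "\<dots> \<longleftrightarrow> real p < \<beta> + 1 / 2" by (auto simp: s_def field_simps)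
  finally show ?thesis unfolding in_D_p2_def G_def[abs_def] km_def .
qed


end
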